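(* Let $C\subseteq\mathbb{R}^2$ be a strictly convex closed differentiable planar curve, equipped with the Euclidean metric and its natural cyclic order. If the convex hull of $C$ contains the evolute of $C$, then for every $r\ge 0$ the 1-skeleton of the Vietoris--Rips complex $\mathrm{VR}(C;r)$ is a cyclic graph or a cone.
   Context: A curve $C\subseteq\mathbb{R}^2$ is strictly convex if $C=\partial Y$ for some set $Y\subseteq\mathbb{R}^2$ such that for all $y,y'\in Y$ and $t\in(0,1)$, the point $ty+(1-t)y'$ lies in the interior of $Y$. For a differentiable parametrization $\alpha$ of $C$, the unit tangent is $T=\alpha'/\|\alpha'\|$, the unit normal is $n=T'/\|T'\|$, the curvature is $\kappa=\|T'\|/\|\alpha'\|$, and the center of curvature at time $t$ is $\alpha(t)+\frac{1}{\kappa(t)}n(\alpha(t))$. The evolute of $C$ is the set of all centers of curvature (equivalently, the envelope of the normal lines). The Vietoris--Rips complex $\mathrm{VR}(X;r)$ has as simplices the finite subsets of $X$ of diameter at most $r$; its 1-skeleton joins distinct $x,y$ when $\|x-y\|\le r$. A graph is a cone if some vertex shares an edge with every other vertex. A cyclic graph is a directed graph (no loops, multiple edges, or oppositely oriented edge pairs) whose vertex set carries a cyclic order such that whenever $x\prec y\prec z\prec x$ and $x\to z$ is an edge, then $x\to y$ and $y\to z$ are edges. *)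

theory Defs
  imports "HOL-Analysis.Analysis"
begin

type_synonym pt = "real^2"

definition strictly_convex_curve :: "pt set \<Rightarrow> bool" where
  "strictly_convex_curve C \<longleftrightarrow>
     (\<exists>Y. C = frontier Y \<and>
        (\<forall>y\<in>Y. \<forall>y'\<in>Y. \<forall>t::real. 0 < t \<and> t < 1 \<longrightarrow> t *\<^sub>R y + (1 - t) *\<^sub>R y' \<in> interior Y))"

definition closed_param :: "(real \<Rightarrow> pt) \<Rightarrow> real \<Rightarrow> bool" where
  "closed_param \<alpha> L \<longleftrightarrow> 0 < L \<and> (\<forall>t. \<alpha> (t + L) = \<alpha> t) \<and> inj_on \<alpha> {0..<L}"

definition unit_tangent :: "(real \<Rightarrow> pt) \<Rightarrow> real \<Rightarrow> pt" where
  "unit_tangent \<alpha> t = (1 / norm (vector_derivative \<alpha> (at t))) *\<^sub>R vector_derivative \<alpha> (at t)"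

definition unit_normal :: "(real \<Rightarrow> pt) \<Rightarrow> real \<Rightarrow> pt" where
  "unit_normal \<alpha> t = (1 / norm (vector_derivative (unit_tangent \<alpha>) (at t)))
                         *\<^sub>R vector_derivative (unit_tangent \<alpha>) (at t)"

definition curvature :: "(real \<Rightarrow> pt) \<Rightarrow> real \<Rightarrow> real" where
  "curvature \<alpha> t = norm (vector_derivative (unit_tangent \<alpha>) (at t)) / norm (vector_derivative \<alpha> (at t))"

definition center_of_curvature :: "(real \<Rightarrow> pt) \<Rightarrow> real \<Rightarrow> pt" where
  "center_of_curvature \<alpha> t = \<alpha> t + (1 / curvature \<alpha> t) *\<^sub>R unit_normal \<alpha> t"

definition evolute :: "(real \<Rightarrow> pt) \<Rightarrow> pt set" where
  "evolute \<alpha> = range (center_of_curvature \<alpha>)"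

definition cyc_order :: "(real \<Rightarrow> pt) \<Rightarrow> real \<Rightarrow> pt \<Rightarrow> pt \<Rightarrow> pt \<Rightarrow> bool" where
  "cyc_order \<alpha> L x y z \<longleftrightarrow>
     (\<exists>s t u. s < t \<and> t < u \<and> u < s + L \<and> \<alpha> s = x \<and> \<alpha> t = y \<and> \<alpha> u = z)"

text \<open>1-skeleton of VR(X;r), as an adjacency relation on X.\<close>
definition VR_edge :: "pt set \<Rightarrow> real \<Rightarrow> pt \<Rightarrow> pt \<Rightarrow> bool" where
  "VR_edge X r x y \<longleftrightarrow> x \<in> X \<and> y \<in> X \<and> x \<noteq> y \<and> dist x y \<le> r"

definition cyclic_digraph :: "'a set \<Rightarrow> ('a \<Rightarrow> 'a \<Rightarrow> 'a \<Rightarrow> bool) \<Rightarrow> ('a \<Rightarrow> 'a \<Rightarrow> bool) \<Rightarrow> bool" where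
  "cyclic_digraph V cyc D \<longleftrightarrow>
     (\<forall>x y. D x y \<longrightarrow> x \<in> V \<and> y \<in> V \<and> x \<noteq> y \<and> \<not> D y x) \<and>
     (\<forall>x\<in>V. \<forall>y\<in>V. \<forall>z\<in>V. cyc x y z \<and> D x z \<longrightarrow> D x y \<and> D y z)"

definition is_cyclic_graph :: "'a set \<Rightarrow> ('a \<Rightarrow> 'a \<Rightarrow> 'a \<Rightarrow> bool) \<Rightarrow> ('a \<Rightarrow> 'a \<Rightarrow> bool) \<Rightarrow> bool" where
  "is_cyclic_graph V cyc E \<longleftrightarrow>
     (\<exists>D. cyclic_digraph V cyc D \<and> (\<forall>x y. E x y \<longleftrightarrow> D x y \<or> D y x))"

definition is_cone :: "'a set \<Rightarrow> ('a \<Rightarrow> 'a \<Rightarrow> bool) \<Rightarrow> bool" where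
  "is_cone V E \<longleftrightarrow> (\<exists>v\<in>V. \<forall>w\<in>V. w \<noteq> v \<longrightarrow> E v w)"

end

theory Submission
  imports Defs
begin

lemma inner_vd:
  fixes f g :: "real \<Rightarrow> 'a::real_inner"
  assumes "(f has_vector_derivative f') (at t)" "(g has_vector_derivative g') (at t)"
  shows "((\<lambda>u. f u \<bullet> g u) has_real_derivative (f' \<bullet> g t + f t \<bullet> g')) (at t)"
proof -
  have "((\<lambda>u. f u \<bullet> g u) has_derivative (\<lambda>h. f t \<bullet> (h *\<^sub>R g') + (h *\<^sub>R f') \<bullet> g t)) (at t)"
    using has_derivative_inner[OF assms(1)[unfolded has_vector_derivative_def] assms(2)[unfolded has_vector_derivative_def]] .
  then show ?thesis unfolding has_field_derivative_def
    by (rule has_derivative_eq_rhs) (auto simp: algebra_simps fun_eq_iff inner_commute)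
qed

lemma decomp2:
  fixes T n w :: "real^2"
  assumes "norm T = 1" "norm n = 1" "T \<bullet> n = 0"
  shows "w = (w \<bullet> T) *\<^sub>R T + (w \<bullet> n) *\<^sub>R n"
proof -
  define a b c d where "a = T$1" "b = T$2" "c = n$1" "d = n$2"
  have nT: "(T \<bullet> T) = 1" using assms(1) by (simp add: dot_square_norm)
  have nn: "(n \<bullet> n) = 1" using assms(2) by (simp add: dot_square_norm)
  have e1: "a*a + b*b = 1" using nT by (simp add: inner_vec_def sum_2 a_b_c_d_def)
  have e2: "c*c + d*d = 1" using nn by (simp add: inner_vec_def sum_2 a_b_c_d_def)
  have e3: "a*c + b*d = 0" using assms(3) by (simp add: inner_vec_def sum_2 a_b_c_d_def)
  have ac: "a*c = -(b*d)" using e3 by linarith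
  have "a*a*(c*c) = (b*b)*(d*d)" using ac by (metis mult.assoc mult.commute mult_minus_left mult_minus_right minus_minus)
  also have "\<dots> = (1 - a*a)*(1 - c*c)" using e1 e2 by (metis add_diff_cancel_left')
  finally have "a*a*(c*c) = (1 - a*a)*(1 - c*c)" .
  hence f1: "a*a + c*c = 1" by (simp add: algebra_simps)
  have "(a*b + c*d)*(a*b+c*d) = a*a*(b*b) + 2*((a*c)*(b*d)) + c*c*(d*d)" by (simp add: algebra_simps)
  also have "(a*c) = -(b*d)" using e3 by simp
  finally have "(a*b + c*d)*(a*b+c*d) = a*a*(b*b) - 2*((b*d)*(b*d)) + c*c*(d*d)" by simp
  also have "\<dots> = 0"
  proof -
    have "b*b = c*c" using e1 f1 by simp
    moreover have "d*d = a*a" using e2 f1 by simp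
    ultimately show ?thesis by (simp add: algebra_simps)
  qed
  finally have f2: "a*b + c*d = 0" by simp
  have f3: "b*b + d*d = 1" using e1 e2 f1 by simp
  show ?thesis
  proof (subst vec_eq_iff, rule allI)
    fix i :: 2
    have "i = 1 \<or> i = 2" using exhaust_2 by blast
    then show "w $ i = ((w \<bullet> T) *\<^sub>R T + (w \<bullet> n) *\<^sub>R n) $ i"
    proof
      assume "i = 1"
      have "((w \<bullet> T) *\<^sub>R T + (w \<bullet> n) *\<^sub>R n) $ 1 = w$1 * (a*a+c*c) + w$2*(a*b+c*d)"
        unfolding a_b_c_d_def by (simp add: inner_vec_def sum_2 algebra_simps)
      then show ?thesis using f1 f2 \<open>i = 1\<close> by simp
    next
      assume "i = 2"
      have "((w \<bullet> T) *\<^sub>R T + (w \<bullet> n) *\<^sub>R n) $ 2 = w$1 * (a*b+c*d) + w$2*(b*b+d*d)"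
        unfolding a_b_c_d_def by (simp add: inner_vec_def sum_2 algebra_simps)
      then show ?thesis using f3 f2 \<open>i = 2\<close> by simp
    qed
  qed
qed

locale geo =
  fixes \<alpha> :: "real \<Rightarrow> real^2" and L :: real and C :: "(real^2) set"
  assumes param: "closed_param \<alpha> L"
    and C_def: "C = \<alpha> ` {0..L}"
    and scvx: "strictly_convex_curve C"
    and diff: "\<And>t. \<alpha> differentiable (at t)"
    and regular: "\<And>t. vector_derivative \<alpha> (at t) \<noteq> 0"
    and diffT: "\<And>t. unit_tangent \<alpha> differentiable (at t)"
    and curv_pos: "\<And>t. curvature \<alpha> t > 0"
    and evol: "evolute \<alpha> \<subseteq> convex hull C"
begin

abbreviation "Tg \<equiv> unit_tangent \<alpha>"
abbreviation "Nm \<equiv> unit_normal \<alpha>"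
abbreviation "dA t \<equiv> vector_derivative \<alpha> (at t)"
abbreviation "dT t \<equiv> vector_derivative Tg (at t)"

lemma Lpos: "0 < L" using param by (simp add: closed_param_def)
lemma per: "\<alpha> (t + L) = \<alpha> t" using param by (simp add: closed_param_def)
lemma per_minus: "\<alpha> (t - L) = \<alpha> t" using per[of "t - L"] by simp
lemma injL: "inj_on \<alpha> {0..<L}" using param by (simp add: closed_param_def)

lemma a_der: "(\<alpha> has_vector_derivative dA t) (at t)"
  using diff vector_derivative_works by blast
lemma T_der: "(Tg has_vector_derivative dT t) (at t)"
  using diffT vector_derivative_works by blast
lemma a_cont: "isCont \<alpha> t"
  using diff differentiable_imp_continuous_within by blast
lemma a_cont_on: "continuous_on S \<alpha>"
  using a_cont by (simp add: continuous_at_imp_continuous_on)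

lemma per_nat: "\<alpha> (t + real m * L) = \<alpha> t"
proof (induction m arbitrary: t)
  case 0 then show ?case by simp
next
  case (Suc m)
  have "t + real (Suc m) * L = (t + real m * L) + L" by (simp add: algebra_simps)
  then have "\<alpha> (t + real (Suc m) * L) = \<alpha> (t + real m * L)" by (metis per)
  then show ?case using Suc by simp
qed

lemma per_int: "\<alpha> (t + of_int k * L) = \<alpha> t"
proof (cases "k \<ge> 0")
  case True
  define m where "m = nat k"
  have "k = int m" using True by (simp add: m_def)
  then show ?thesis using per_nat by simp
next
  case False
  define m where "m = nat (- k)"
  have m: "k = - int m" using False by (simp add: m_def)
  have "\<alpha> (t + of_int k * L) = \<alpha> ((t + of_int k * L) + real m * L)" using per_nat by simp
  also have "(t + of_int k * L) + real m * L = t" using m by simp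
  finally show ?thesis .
qed

lemma reduce_ex: "\<exists>k::int. 0 \<le> t + of_int k * L \<and> t + of_int k * L < L"
proof -
  define k where "k = - \<lfloor>t / L\<rfloor>"
  have f1: "of_int \<lfloor>t / L\<rfloor> \<le> t / L" by (rule of_int_floor_le)
  have f2: "t / L < of_int \<lfloor>t / L\<rfloor> + 1" by (rule real_of_int_floor_add_one_gt)
  have "of_int \<lfloor>t / L\<rfloor> * L \<le> t" using f1 Lpos by (metis pos_le_divide_eq)
  moreover have "t < (of_int \<lfloor>t / L\<rfloor> + 1) * L" using f2 Lpos by (metis pos_divide_less_eq)
  moreover have "t + of_int k * L = t - of_int \<lfloor>t / L\<rfloor> * L" by (simp add: k_def)
  ultimately show ?thesis by (intro exI[of _ k]) (simp add: algebra_simps)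
qed

lemma reduce: "\<exists>t'. 0 \<le> t' \<and> t' < L \<and> \<alpha> t' = \<alpha> t"
  using reduce_ex[of t] per_int by metis

lemma range_C: "range \<alpha> = C"
proof
  show "range \<alpha> \<subseteq> C"
  proof
    fix x assume "x \<in> range \<alpha>"
    then obtain t where "x = \<alpha> t" by auto
    then obtain t' where "0 \<le> t'" "t' < L" "\<alpha> t' = x" using reduce by metis
    then show "x \<in> C" unfolding C_def by force
  qed
  show "C \<subseteq> range \<alpha>" unfolding C_def by auto
qed

lemma in_C [simp]: "\<alpha> t \<in> C" using range_C by auto

lemma inj_mod: assumes "\<alpha> a = \<alpha> b" "a < b" "b < a + L" shows False
proof -
  obtain k :: int where k: "0 \<le> a + of_int k * L" "a + of_int k * L < L" using reduce_ex by blast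
  define a' b' where "a' = a + of_int k * L" "b' = b + of_int k * L"
  have eq: "\<alpha> a' = \<alpha> b'" using assms(1) per_int by (simp add: a'_b'_def)
  have "a' < b'" "b' < a' + L" using assms by (auto simp: a'_b'_def)
  show False
  proof (cases "b' < L")
    case True
    have "a' \<in> {0..<L}" "b' \<in> {0..<L}" using k True \<open>a' < b'\<close> by (auto simp: a'_b'_def)
    then have "a' = b'" using inj_onD[OF injL eq] by blast
    then show False using \<open>a' < b'\<close> by simp
  next
    case False
    have "\<alpha> (b' - L) = \<alpha> a'" using eq per_minus by simp
    moreover have "0 \<le> b' - L" "b' - L < L" "b' - L < a'" using False \<open>b' < a' + L\<close> k a'_b'_def by auto
    moreover have "a' \<in> {0..<L}" using k by (auto simp: a'_b'_def)
    ultimately have "b' - L = a'" using inj_onD[OF injL] by auto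
    then show False using \<open>b' - L < a'\<close> by simp
  qed
qed

lemma same_point: assumes "\<alpha> a = \<alpha> b" shows "\<exists>k::int. b = a + of_int k * L"
proof -
  obtain k1 :: int where k1: "0 \<le> a + of_int k1 * L" "a + of_int k1 * L < L" using reduce_ex by blast
  obtain k2 :: int where k2: "0 \<le> b + of_int k2 * L" "b + of_int k2 * L < L" using reduce_ex by blast
  have "\<alpha> (a + of_int k1 * L) = \<alpha> (b + of_int k2 * L)" using assms per_int by simp
  then have "a + of_int k1 * L = b + of_int k2 * L" using inj_onD[OF injL] k1 k2 by auto
  then have "b = a + of_int (k1 - k2) * L" by (simp add: algebra_simps)
  then show ?thesis by blast
qed

lemma nA: "norm (dA t) > 0" using regular by simp

lemma T_eq: "Tg t = (1 / norm (dA t)) *\<^sub>R dA t" by (simp add: unit_tangent_def)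
lemma T_norm: "norm (Tg t) = 1" using nA[of t] by (simp add: T_eq)
lemma A_T: "dA t = norm (dA t) *\<^sub>R Tg t" using nA[of t] by (simp add: T_eq)
lemma A_dot_T: "dA t \<bullet> Tg t = norm (dA t)"
proof -
  have "dA t \<bullet> Tg t = norm (dA t) * (Tg t \<bullet> Tg t)" by (subst A_T) simp
  also have "Tg t \<bullet> Tg t = 1" using T_norm by (simp add: dot_square_norm)
  finally show ?thesis by simp
qed

lemma T_orth: "Tg t \<bullet> dT t = 0"
proof -
  have d1: "((\<lambda>u. Tg u \<bullet> Tg u) has_real_derivative (dT t \<bullet> Tg t + Tg t \<bullet> dT t)) (at t)"
    by (rule inner_vd[OF T_der T_der])
  have "(\<lambda>u. Tg u \<bullet> Tg u) = (\<lambda>u. 1)" using T_norm by (simp add: dot_square_norm)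
  then have d2: "((\<lambda>u. Tg u \<bullet> Tg u) has_real_derivative 0) (at t)" by simp
  have "dT t \<bullet> Tg t + Tg t \<bullet> dT t = 0" using DERIV_unique[OF d1 d2] .
  then show ?thesis by (simp add: inner_commute)
qed

lemma dT_norm: "norm (dT t) = curvature \<alpha> t * norm (dA t)"
  using nA[of t] by (simp add: curvature_def)

lemma dT_pos: "norm (dT t) > 0" using dT_norm curv_pos nA by simp

lemma N_eq: "Nm t = (1 / norm (dT t)) *\<^sub>R dT t" by (simp add: unit_normal_def)
lemma N_norm: "norm (Nm t) = 1" using dT_pos[of t] by (simp add: N_eq)
lemma T_N: "Tg t \<bullet> Nm t = 0" using T_orth by (simp add: N_eq)
lemma dT_N: "dT t = norm (dT t) *\<^sub>R Nm t" using dT_pos[of t] by (simp add: N_eq)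

lemma decompT: "w = (w \<bullet> Tg t) *\<^sub>R Tg t + (w \<bullet> Nm t) *\<^sub>R Nm t"
  by (rule decomp2[OF T_norm N_norm T_N])

end

context geo begin

lemma Y_ex: "\<exists>Y. C = frontier Y \<and> convex Y \<and> interior Y \<noteq> {}"
proof -
  obtain Y where CY: "C = frontier Y" and sc: "\<forall>y\<in>Y. \<forall>y'\<in>Y. \<forall>t::real. 0 < t \<and> t < 1 \<longrightarrow> t *\<^sub>R y + (1 - t) *\<^sub>R y' \<in> interior Y"
    using scvx unfolding strictly_convex_curve_def by blast
  have cY: "convex Y"
    unfolding convex_alt
  proof (intro ballI allI impI)
    fix x y and u :: real assume xy: "x \<in> Y" "y \<in> Y" and u: "0 \<le> u \<and> u \<le> 1"
    show "(1 - u) *\<^sub>R x + u *\<^sub>R y \<in> Y"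
    proof (cases "u = 0 \<or> u = 1")
      case True then show ?thesis using xy by auto
    next
      case False
      then have "0 < 1 - u" "1 - u < 1" using u by auto
      then have "(1 - u) *\<^sub>R x + (1 - (1 - u)) *\<^sub>R y \<in> interior Y" using sc xy by blast
      then show ?thesis using interior_subset by auto
    qed
  qed
  have d: "\<alpha> 0 \<noteq> \<alpha> (L/2)"
  proof
    assume "\<alpha> 0 = \<alpha> (L/2)"
    then show False using inj_mod[of 0 "L/2"] Lpos by simp
  qed
  have two: "\<exists>y1\<in>Y. \<exists>y2\<in>Y. y1 \<noteq> y2"
  proof (rule ccontr)
    assume "\<not> ?thesis"
    then have sub: "\<forall>y1\<in>Y. \<forall>y2\<in>Y. y1 = y2" by blast
    have "finite Y"
    proof (cases "Y = {}")
      case False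
      then obtain y0 where "y0 \<in> Y" by blast
      then have "Y = {y0}" using sub by blast
      then show ?thesis by simp
    qed simp
    then have "closed Y" by (rule finite_imp_closed)
    then have "frontier Y \<subseteq> Y" by (simp add: frontier_def)
    then have "\<alpha> 0 \<in> Y" "\<alpha> (L/2) \<in> Y" using CY in_C by auto
    then show False using sub d by blast
  qed
  then obtain y1 y2 where "y1 \<in> Y" "y2 \<in> Y" "y1 \<noteq> y2" by blast
  then have "(1/2::real) *\<^sub>R y1 + (1 - 1/2) *\<^sub>R y2 \<in> interior Y"
    using sc[rule_format, of y1 y2 "1/2"] by linarith
  then have "interior Y \<noteq> {}" by blast
  then show ?thesis using CY cY by blast
qed

lemma K_props: "\<exists>Y. convex Y \<and> interior Y \<noteq> {} \<and> C \<subseteq> closure Y \<and> convex hull C \<subseteq> closure Y \<and> C \<inter> interior Y = {}"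
proof -
  obtain Y where Y: "C = frontier Y" "convex Y" "interior Y \<noteq> {}" using Y_ex by blast
  have CY: "C \<subseteq> closure Y" using Y(1) by (simp add: frontier_def)
  have "convex hull C \<subseteq> closure Y" using hull_minimal[of C "closure Y" convex] CY convex_closure[OF Y(2)] by blast
  moreover have "C \<inter> interior Y = {}" using Y(1) by (auto simp: frontier_def)
  ultimately show ?thesis using Y CY by blast
qed

lemma notint: "y \<in> C \<Longrightarrow> y \<notin> interior (convex hull C)"
proof -
  assume y: "y \<in> C"
  obtain Y where Y: "convex Y" "convex hull C \<subseteq> closure Y" "C \<inter> interior Y = {}" using K_props by blast
  have "interior (convex hull C) \<subseteq> interior (closure Y)" by (rule interior_mono[OF Y(2)])
  also have "\<dots> = interior Y" by (rule convex_interior_closure[OF Y(1)])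
  finally show ?thesis using y Y(3) by blast
qed

lemma support: "\<exists>a. a \<noteq> 0 \<and> (\<forall>y\<in>C. a \<bullet> \<alpha> t \<le> a \<bullet> y)"
proof -
  obtain Y where Y: "convex Y" "interior Y \<noteq> {}" "C \<subseteq> closure Y" "C \<inter> interior Y = {}" using K_props by blast
  have ri: "rel_interior Y = interior Y" by (rule rel_interior_nonempty_interior[OF Y(2)])
  have aC: "\<alpha> t \<in> C" by simp
  have "\<alpha> t \<in> closure Y" using Y(3) aC by blast
  moreover have "\<alpha> t \<notin> rel_interior Y" using Y(4) aC ri by blast
  ultimately
  obtain a where "a \<noteq> 0" "\<And>y. y \<in> closure Y \<Longrightarrow> a \<bullet> \<alpha> t \<le> a \<bullet> y"
    using supporting_hyperplane_relative_frontier[OF Y(1)] by metis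
  then show ?thesis using Y(3) by blast
qed

lemma phi_der: "((\<lambda>u. a \<bullet> \<alpha> u) has_real_derivative (norm (dA u) * (a \<bullet> Tg u))) (at u)"
proof -
  have "((\<lambda>u. a \<bullet> \<alpha> u) has_real_derivative (0 \<bullet> \<alpha> u + a \<bullet> dA u)) (at u)"
    by (rule inner_vd[OF has_vector_derivative_const a_der])
  moreover have "a \<bullet> dA u = norm (dA u) * (a \<bullet> Tg u)" by (subst A_T) simp
  ultimately show ?thesis by simp
qed

lemma inward: assumes y: "y \<in> C" shows "(y - \<alpha> t) \<bullet> Nm t \<ge> 0"
proof -
  obtain a where a: "a \<noteq> 0" "\<forall>y\<in>C. a \<bullet> \<alpha> t \<le> a \<bullet> y" using support by blast
  define \<phi> where "\<phi> u = a \<bullet> \<alpha> u" for u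
  have phid: "\<And>u. (\<phi> has_real_derivative (norm (dA u) * (a \<bullet> Tg u))) (at u)"
    unfolding \<phi>_def by (rule phi_der)
  have mn: "\<And>u. \<phi> t \<le> \<phi> u" using a(2) in_C unfolding \<phi>_def by blast
  have "norm (dA t) * (a \<bullet> Tg t) = 0"
    using DERIV_local_min[OF phid[of t], of 1] mn by auto
  then have aT: "a \<bullet> Tg t = 0" using nA[of t] by simp
  have psid: "((\<lambda>u. Tg u \<bullet> a) has_real_derivative (dT t \<bullet> a + Tg t \<bullet> 0)) (at t)"
    by (rule inner_vd[OF T_der has_vector_derivative_const])
  have dTa: "dT t \<bullet> a \<ge> 0"
  proof (rule ccontr)
    assume "\<not> ?thesis"
    then have neg: "dT t \<bullet> a + Tg t \<bullet> 0 < 0" by simp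
    obtain d where d: "d > 0" "\<And>h. h > 0 \<Longrightarrow> h < d \<Longrightarrow> Tg t \<bullet> a > Tg (t + h) \<bullet> a"
      using DERIV_neg_dec_right[OF psid neg] by blast
    have negT: "a \<bullet> Tg u < 0" if "t < u" "u < t + d" for u
      using d(2)[of "u - t"] that aT by (simp add: inner_commute)
    have "\<phi> (t + d/4) \<le> \<phi> t"
    proof (rule DERIV_nonpos_imp_nonincreasing[of t "t + d/4" \<phi>])
      show "t \<le> t + d/4" using d by simp
      fix x assume x: "t \<le> x" "x \<le> t + d/4"
      show "\<exists>y. (\<phi> has_real_derivative y) (at x) \<and> y \<le> 0"
      proof (cases "x = t")
        case True then show ?thesis using phid[of x] aT by auto
      next
        case False
        then have "a \<bullet> Tg x < 0" using negT x d by auto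
        have "norm (dA x) * (a \<bullet> Tg x) < 0" by (rule mult_pos_neg[OF nA[of x] \<open>a \<bullet> Tg x < 0\<close>])
        then show ?thesis using phid[of x] by (intro exI[of _ "norm (dA x) * (a \<bullet> Tg x)"]) simp
      qed
    qed
    moreover have "\<phi> (t + d/2) < \<phi> (t + d/4)"
    proof (rule DERIV_neg_imp_decreasing[of "t + d/4" "t + d/2" \<phi>])
      show "t + d/4 < t + d/2" using d by simp
      fix x assume x: "t + d/4 \<le> x" "x \<le> t + d/2"
      then have "a \<bullet> Tg x < 0" using negT d by auto
      then have "norm (dA x) * (a \<bullet> Tg x) < 0" by (rule mult_pos_neg[OF nA[of x]])
      then show "\<exists>y. (\<phi> has_real_derivative y) (at x) \<and> y < 0"
        using phid[of x] by (intro exI[of _ "norm (dA x) * (a \<bullet> Tg x)"]) simp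
    qed
    ultimately show False using mn[of "t + d/2"] by simp
  qed
  have aN: "a = (a \<bullet> Nm t) *\<^sub>R Nm t" using decompT[of a t] aT by simp
  have "dT t \<bullet> a = norm (dT t) * (Nm t \<bullet> a)" by (subst dT_N) simp
  then have "Nm t \<bullet> a \<ge> 0" using dTa dT_pos[of t] by (simp add: zero_le_mult_iff)
  moreover have "a \<bullet> Nm t \<noteq> 0" using aN a(1) by (metis scaleR_zero_left)
  ultimately have pos: "a \<bullet> Nm t > 0" by (simp add: inner_commute)
  have "a \<bullet> (y - \<alpha> t) \<ge> 0" using a(2) y by (simp add: inner_diff_right)
  moreover have "a \<bullet> (y - \<alpha> t) = (a \<bullet> Nm t) * ((y - \<alpha> t) \<bullet> Nm t)"
    by (subst aN) (simp add: inner_commute)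
  ultimately show ?thesis using pos by (simp add: zero_le_mult_iff)
qed

end

context geo begin

lemma outside_near: "\<exists>x. dist x (\<alpha> s) < e \<and> x \<notin> convex hull C" if "e > 0"
proof -
  have "\<alpha> s \<notin> interior (convex hull C)" using notint by simp
  then have "\<not> ball (\<alpha> s) e \<subseteq> convex hull C" using that mem_interior by blast
  then obtain x where "x \<in> ball (\<alpha> s) e" "x \<notin> convex hull C" by blast
  then show ?thesis by (auto simp: dist_commute)
qed

lemma G_der: "((\<lambda>u. (\<alpha> u - x) \<bullet> (\<alpha> u - x)) has_real_derivative 2 * (norm (dA u) * ((\<alpha> u - x) \<bullet> Tg u))) (at u)"
proof -
  have d: "((\<lambda>u. \<alpha> u - x) has_vector_derivative (dA u - 0)) (at u)"
    by (rule has_vector_derivative_diff[OF a_der has_vector_derivative_const])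
  have "((\<lambda>u. (\<alpha> u - x) \<bullet> (\<alpha> u - x)) has_real_derivative ((dA u - 0) \<bullet> (\<alpha> u - x) + (\<alpha> u - x) \<bullet> (dA u - 0))) (at u)"
    by (rule inner_vd[OF d d])
  moreover have "(dA u - 0) \<bullet> (\<alpha> u - x) + (\<alpha> u - x) \<bullet> (dA u - 0) = 2 * (norm (dA u) * ((\<alpha> u - x) \<bullet> Tg u))"
    by (subst (1 2) A_T) (simp add: inner_commute)
  ultimately show ?thesis by simp
qed

lemma h_der: "((\<lambda>u. (\<alpha> u - x) \<bullet> Tg u) has_real_derivative (norm (dA u) + (\<alpha> u - x) \<bullet> dT u)) (at u)"
proof -
  have d: "((\<lambda>u. \<alpha> u - x) has_vector_derivative (dA u - 0)) (at u)"
    by (rule has_vector_derivative_diff[OF a_der has_vector_derivative_const])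
  have "((\<lambda>u. (\<alpha> u - x) \<bullet> Tg u) has_real_derivative ((dA u - 0) \<bullet> Tg u + (\<alpha> u - x) \<bullet> dT u)) (at u)"
    by (rule inner_vd[OF d T_der])
  then show ?thesis using A_dot_T by simp
qed

lemma QC:
  assumes "s < t1" "t1 < t2" "t2 < t3" "t3 < s + L"
  shows "min (dist (\<alpha> t1) (\<alpha> s)) (dist (\<alpha> t3) (\<alpha> s)) \<le> dist (\<alpha> t2) (\<alpha> s)"
proof (rule ccontr)
  assume neg: "\<not> ?thesis"
  define g where "g u = dist (\<alpha> u) (\<alpha> s)" for u
  define eps where "eps = min (g t1) (g t3) - g t2"
  have eps: "eps > 0" using neg by (simp add: eps_def g_def min_def split: if_splits)
  have gc: "continuous_on {t1..t3} g" unfolding g_def by (intro continuous_intros a_cont_on)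
  obtain tm where tm: "tm \<in> {t1..t3}" "\<And>u. u \<in> {t1..t3} \<Longrightarrow> g tm \<le> g u"
    using continuous_attains_inf[OF compact_Icc _ gc] assms by auto
  have "\<alpha> tm \<noteq> \<alpha> s" using inj_mod[of s tm] tm assms by force
  then have gtm: "g tm > 0" by (simp add: g_def)
  define e where "e = min (g tm) (eps/2)"
  have e: "e > 0" using gtm eps by (simp add: e_def)
  obtain x where x: "dist x (\<alpha> s) < e" "x \<notin> convex hull C" using outside_near[OF e] by blast
  define q where "q u = dist (\<alpha> u) x" for u
  have qg1: "q u \<le> g u + dist x (\<alpha> s)" for u
    unfolding q_def g_def by (metis dist_commute dist_triangle)
  have qg2: "g u \<le> q u + dist x (\<alpha> s)" for u
    unfolding q_def g_def by (metis dist_triangle)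
  have q12: "q t2 < q t1" "q t2 < q t3"
    using qg1[of t2] qg2[of t1] qg2[of t3] x(1) unfolding e_def eps_def by auto
  have qc: "continuous_on {t1..t3} q" unfolding q_def by (intro continuous_intros a_cont_on)
  obtain ts where ts: "ts \<in> {t1..t3}" "\<And>u. u \<in> {t1..t3} \<Longrightarrow> q ts \<le> q u"
    using continuous_attains_inf[OF compact_Icc _ qc] assms by auto
  have tsi: "t1 < ts" "ts < t3"
  proof -
    have "q ts \<le> q t2" using ts(2) assms by auto
    then show "t1 < ts" "ts < t3" using ts(1) q12 by (auto simp: order.order_iff_strict)
  qed
  define G where "G u = (\<alpha> u - x) \<bullet> (\<alpha> u - x)" for u
  have Gq: "G u = (q u)^2" for u unfolding G_def q_def by (simp add: dot_square_norm dist_norm)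
  have Gmin: "G ts \<le> G u" if "u \<in> {t1..t3}" for u
    using ts(2)[OF that] unfolding Gq by (simp add: q_def power_mono)
  define h where "h u = (\<alpha> u - x) \<bullet> Tg u" for u
  have Gd: "(G has_real_derivative 2 * (norm (dA u) * h u)) (at u)" for u
    unfolding G_def h_def by (rule G_der)
  have m1: "0 < min (ts - t1) (t3 - ts)" using tsi by simp
  have m2: "\<forall>y. \<bar>ts - y\<bar> < min (ts - t1) (t3 - ts) \<longrightarrow> G ts \<le> G y"
    using Gmin by (auto simp: abs_if split: if_splits)
  have "2 * (norm (dA ts) * h ts) = 0" by (rule DERIV_local_min[OF Gd[of ts] m1 m2])
  then have h0: "h ts = 0" using nA[of ts] by simp
  define \<mu> where "\<mu> = (\<alpha> ts - x) \<bullet> Nm ts"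
  have dec: "\<alpha> ts - x = \<mu> *\<^sub>R Nm ts"
    using decompT[of "\<alpha> ts - x" ts] h0 by (simp add: h_def \<mu>_def)
  have xeq: "x = \<alpha> ts - \<mu> *\<^sub>R Nm ts" using dec by (simp add: algebra_simps)
  consider "\<mu> > 0" | "\<mu> = 0" | "\<mu> < 0" by linarith
  then show False
  proof cases
    case 1
    have inw: "(\<alpha> s - \<alpha> ts) \<bullet> Nm ts \<ge> 0" using inward by simp
    have ip: "(\<alpha> s - \<alpha> ts) \<bullet> (x - \<alpha> ts) \<le> 0"
    proof -
      have "(\<alpha> s - \<alpha> ts) \<bullet> (x - \<alpha> ts) = - \<mu> * ((\<alpha> s - \<alpha> ts) \<bullet> Nm ts)"
        by (simp add: xeq)
      then show ?thesis using 1 inw by (simp add: mult_nonneg_nonneg)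
    qed
    have "(x - \<alpha> s) \<bullet> (x - \<alpha> s) = (x - \<alpha> ts) \<bullet> (x - \<alpha> ts) - 2 * ((\<alpha> s - \<alpha> ts) \<bullet> (x - \<alpha> ts)) + (\<alpha> s - \<alpha> ts) \<bullet> (\<alpha> s - \<alpha> ts)"
      by (simp add: algebra_simps inner_diff_left inner_diff_right inner_commute)
    then have "(x - \<alpha> s) \<bullet> (x - \<alpha> s) \<ge> (\<alpha> s - \<alpha> ts) \<bullet> (\<alpha> s - \<alpha> ts)"
      using ip by (smt (verit) inner_ge_zero)
    then have "(dist x (\<alpha> s))^2 \<ge> (g ts)^2" by (simp add: g_def dist_norm dot_square_norm norm_minus_commute)
    then have "dist x (\<alpha> s) \<ge> g ts" by (simp add: g_def power2_le_iff_abs_le)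
    moreover have "g tm \<le> g ts" using tm(2) ts(1) by simp
    ultimately show False using x(1) by (simp add: e_def)
  next
    case 2
    then have "x = \<alpha> ts" using xeq by simp
    then have "x \<in> convex hull C" using hull_subset[of C convex] in_C by blast
    then show False using x(2) by simp
  next
    case 3
    define lam where "lam = - \<mu>"
    define \<kappa> where "\<kappa> = curvature \<alpha> ts"
    have lamp: "lam > 0" using 3 by (simp add: lam_def)
    have kap: "\<kappa> > 0" using curv_pos by (simp add: \<kappa>_def)
    have xeq2: "x = \<alpha> ts + lam *\<^sub>R Nm ts" using xeq by (simp add: lam_def)
    have big: "lam * \<kappa> > 1"
    proof (rule ccontr)
      assume "\<not> ?thesis"
      then have th: "lam * \<kappa> \<le> 1" by simp
      define c where "c = center_of_curvature \<alpha> ts"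
      have cK: "c \<in> convex hull C" using evol unfolding evolute_def c_def by blast
      have aK: "\<alpha> ts \<in> convex hull C" using hull_subset[of C convex] in_C by blast
      have "(1 - lam * \<kappa>) *\<^sub>R \<alpha> ts + (lam * \<kappa>) *\<^sub>R c \<in> convex hull C"
        by (rule convexD[OF convex_convex_hull aK cK]) (use th lamp kap in auto)
      moreover have "(1 - lam * \<kappa>) *\<^sub>R \<alpha> ts + (lam * \<kappa>) *\<^sub>R c = x"
        using kap unfolding c_def center_of_curvature_def xeq2 \<kappa>_def
        by (simp add: algebra_simps)
      ultimately show False using x(2) by simp
    qed
    have hd: "(h has_real_derivative (norm (dA ts) + (\<alpha> ts - x) \<bullet> dT ts)) (at ts)"
      unfolding h_def by (rule h_der)
    have "(\<alpha> ts - x) \<bullet> dT ts = norm (dT ts) * \<mu>"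
      by (subst dT_N) (simp add: \<mu>_def)
    also have "\<dots> = - (\<kappa> * norm (dA ts)) * lam" by (simp add: dT_norm \<kappa>_def lam_def)
    finally have "norm (dA ts) + (\<alpha> ts - x) \<bullet> dT ts = norm (dA ts) * (1 - lam * \<kappa>)"
      by (simp add: algebra_simps)
    moreover have "norm (dA ts) * (1 - lam * \<kappa>) < 0"
      using nA[of ts] big by (simp add: mult_pos_neg)
    ultimately have hneg: "norm (dA ts) + (\<alpha> ts - x) \<bullet> dT ts < 0" by simp
    obtain d where d: "d > 0" "\<And>k. k > 0 \<Longrightarrow> k < d \<Longrightarrow> h ts < h (ts - k)"
      using DERIV_neg_dec_left[OF hd hneg] by blast
    define d' where "d' = min d (ts - t1)"
    have d': "d' > 0" "d' \<le> d" "d' \<le> ts - t1" using d tsi by (auto simp: d'_def)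
    have hpos: "h u > 0" if "ts - d' < u" "u < ts" for u
      using d(2)[of "ts - u"] that d' h0 by auto
    have "G (ts - d'/2) < G (ts - d'/4)"
    proof (rule DERIV_pos_imp_increasing[of "ts - d'/2" "ts - d'/4" G])
      show "ts - d'/2 < ts - d'/4" using d' by simp
      fix y assume y: "ts - d'/2 \<le> y" "y \<le> ts - d'/4"
      then have "h y > 0" using hpos d' by auto
      then have "2 * (norm (dA y) * h y) > 0" using nA[of y] by simp
      then show "\<exists>z. (G has_real_derivative z) (at y) \<and> z > 0" using Gd[of y] by blast
    qed
    moreover have "G (ts - d'/4) \<le> G ts"
    proof (rule DERIV_nonneg_imp_nondecreasing[of "ts - d'/4" ts G])
      show "ts - d'/4 \<le> ts" using d' by simp
      fix y assume y: "ts - d'/4 \<le> y" "y \<le> ts"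
      show "\<exists>z. (G has_real_derivative z) (at y) \<and> z \<ge> 0"
      proof (cases "y = ts")
        case True then show ?thesis using Gd[of y] h0 by auto
      next
        case False
        then have "h y > 0" using hpos d' y by auto
        then have "2 * (norm (dA y) * h y) \<ge> 0" using nA[of y] by simp
        then show ?thesis using Gd[of y] by blast
      qed
    qed
    moreover have "G ts \<le> G (ts - d'/2)" using Gmin d' tsi by auto
    ultimately show False by simp
  qed
qed

end

locale comb = geo +
  fixes r :: real
  assumes r: "r \<ge> 0"
begin

abbreviation far :: "real \<Rightarrow> real \<Rightarrow> bool" where "far s t \<equiv> r < dist (\<alpha> s) (\<alpha> t)"

lemma far_sym: "far s t = far t s" by (simp add: dist_commute)
lemma far_refl: "\<not> far s s" using r by simp
lemma far_perR: "far s (t + L) = far s t" by (simp add: per)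
lemma far_perL: "far (s + L) t = far s t" by (simp add: per)
lemma far_perR': "far s (t - L) = far s t" by (simp add: per_minus)

lemma QCf: assumes "s < t1" "t1 < t2" "t2 < t3" "t3 < s + L" "far s t1" "far s t3" shows "far s t2"
  using QC[OF assms(1-4)] assms(5,6) by (simp add: dist_commute)

lemma rep: "\<exists>w'. s \<le> w' \<and> w' < s + L \<and> \<alpha> w' = \<alpha> w"
proof -
  obtain k :: int where k: "0 \<le> (w - s) + of_int k * L" "(w - s) + of_int k * L < L" using reduce_ex by blast
  show ?thesis using k per_int[of w k] by (intro exI[of _ "w + of_int k * L"]) auto
qed

lemma NC': assumes NC: "\<forall>s. \<exists>w. far s w" shows "\<exists>w. s < w \<and> w < s + L \<and> far s w"
proof -
  obtain w where "far s w" using NC by blast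
  obtain w' where w': "s \<le> w'" "w' < s + L" "\<alpha> w' = \<alpha> w" using rep by blast
  have "far s w'" using \<open>far s w\<close> w'(3) by simp
  then have "w' \<noteq> s" using far_refl by auto
  then show ?thesis using w' \<open>far s w'\<close> by (intro exI[of _ w']) auto
qed

lemma dcont: "continuous_on UNIV (\<lambda>z. dist (\<alpha> z) (\<alpha> w))"
  by (intro continuous_intros a_cont_on)

lemma openA: "open {z. \<exists>w. z < w \<and> w < t \<and> far z w}"
  by (intro open_Collect_ex open_Collect_conj open_Collect_less open_Collect_const continuous_intros dcont)

lemma openB: "open {z. \<exists>w. t < w \<and> w < z + L \<and> far z w}"
  by (intro open_Collect_ex open_Collect_conj open_Collect_less open_Collect_const continuous_intros dcont)

lemma openA': "open {z. \<exists>w. s < w \<and> w < z \<and> far z w}"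
  by (intro open_Collect_ex open_Collect_conj open_Collect_less open_Collect_const continuous_intros dcont)

lemma openB': "open {z. \<exists>w. z < w \<and> w < s + L \<and> far z w}"
  by (intro open_Collect_ex open_Collect_conj open_Collect_less open_Collect_const continuous_intros dcont)

lemma Ec:
  assumes NC: "\<forall>s. \<exists>w. far s w"
    and st: "s < t" "t < s + L" "\<not> far s t"
    and v: "s < v" "v < t" "far s v"
    and u: "t < u" "u < s + L" "far t u"
  shows False
proof -
  have near_t: "\<not> far z t" if "s \<le> z" "z \<le> t" for z
  proof
    assume fz: "far z t"
    have "z \<noteq> s" using fz st(3) by auto
    moreover have "z \<noteq> t" using fz far_refl by auto
    ultimately have z: "s < z" "z < t" using that by auto
    have "far t (z + L)" using fz far_perR far_sym by metis
    then have "far t (s + L)" using QCf[of t u "s + L" "z + L"] u z by auto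
    then show False using st(3) far_perR far_sym by metis
  qed
  define A where "A = {z. \<exists>w. z < w \<and> w < t \<and> far z w}"
  define B where "B = {z. \<exists>w. t < w \<and> w < z + L \<and> far z w}"
  have oA: "open A" unfolding A_def by (rule openA)
  have oB: "open B" unfolding B_def by (rule openB)
  have disj: "A \<inter> B \<inter> {s..<t} = {}"
  proof (rule ccontr)
    assume "A \<inter> B \<inter> {s..<t} \<noteq> {}"
    then obtain z w1 w2 where z: "s \<le> z" "z < t" and w1: "z < w1" "w1 < t" "far z w1"
      and w2: "t < w2" "w2 < z + L" "far z w2" unfolding A_def B_def by auto
    have "far z t" using QCf[of z w1 t w2] z w1 w2 by auto
    then show False using near_t z by auto
  qed
  have cov: "{s..<t} \<subseteq> A \<union> B"
  proof
    fix z assume z: "z \<in> {s..<t}"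
    obtain w where w: "z < w" "w < z + L" "far z w" using NC'[OF NC] by blast
    have "w \<noteq> t" using w(3) near_t z by auto
    then show "z \<in> A \<union> B" using w unfolding A_def B_def by (cases "w < t") auto
  qed
  have sA: "s \<in> A \<inter> {s..<t}" using v st unfolding A_def by auto
  have tB: "t \<in> B" using u st unfolding B_def by auto
  obtain e where e: "e > 0" "ball t e \<subseteq> B" using oB tB open_contains_ball by blast
  define z where "z = t - min (e/2) ((t - s)/2)"
  have "z \<in> ball t e" using e st by (auto simp: z_def dist_real_def)
  moreover have "z \<in> {s..<t}"
  proof -
    have "min (e/2) ((t - s)/2) \<le> (t - s)/2" by (rule min.cobounded2)
    moreover have "min (e/2) ((t - s)/2) > 0" using e st by auto
    ultimately
    show ?thesis unfolding z_def by simp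
  qed
  ultimately have "B \<inter> {s..<t} \<noteq> {}" using e by blast
  then show False using connectedD[OF connected_Ico oA oB disj cov] sA by blast
qed

lemma Ed:
  assumes NC: "\<forall>s. \<exists>w. far s w"
    and st: "s < t" "t < s + L" "\<not> far s t"
    and v: "s < v" "v < t" "far t v"
    and u: "t < u" "u < s + L" "far s u"
  shows False
proof -
  have near_s: "\<not> far s z" if "s \<le> z" "z \<le> t" for z
  proof
    assume fz: "far s z"
    have "z \<noteq> t" using fz st(3) by auto
    moreover have "z \<noteq> s" using fz far_refl by auto
    ultimately have z: "s < z" "z < t" using that by auto
    have "far s t" using QCf[of s z t u] u z fz st by auto
    then show False using st(3) by auto
  qed
  define A where "A = {z. \<exists>w. s < w \<and> w < z \<and> far z w}"
  define B where "B = {z. \<exists>w. z < w \<and> w < s + L \<and> far z w}"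
  have oA: "open A" unfolding A_def by (rule openA')
  have oB: "open B" unfolding B_def by (rule openB')
  have disj: "A \<inter> B \<inter> {s<..t} = {}"
  proof (rule ccontr)
    assume "A \<inter> B \<inter> {s<..t} \<noteq> {}"
    then obtain z w1 w2 where z: "s < z" "z \<le> t" and w1: "s < w1" "w1 < z" "far z w1"
      and w2: "z < w2" "w2 < s + L" "far z w2" unfolding A_def B_def by auto
    have "far z (w1 + L)" using w1(3) far_perR by metis
    then have "far z (s + L)" using QCf[of z w2 "s + L" "w1 + L"] z w1 w2 by auto
    then have "far s z" using far_perR far_sym by metis
    then show False using near_s z by auto
  qed
  have cov: "{s<..t} \<subseteq> A \<union> B"
  proof
    fix z assume z: "z \<in> {s<..t}"
    obtain w where w: "z < w" "w < z + L" "far z w" using NC'[OF NC] by blast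
    have "w \<noteq> s + L"
    proof
      assume "w = s + L"
      then have "far s z" using w(3) far_perR far_sym by metis
      then show False using near_s z by auto
    qed
    show "z \<in> A \<union> B"
    proof (cases "w < s + L")
      case True then show ?thesis using w unfolding B_def by auto
    next
      case False
      then have "s < w - L" "w - L < z" using w \<open>w \<noteq> s + L\<close> by auto
      moreover have "far z (w - L)" using w(3) far_perR' by metis
      ultimately show ?thesis unfolding A_def by auto
    qed
  qed
  have tA: "t \<in> A \<inter> {s<..t}" using v st unfolding A_def by auto
  have "s < u" using st u by simp
  then have sB: "s \<in> B" using u unfolding B_def by blast
  obtain e where e: "e > 0" "ball s e \<subseteq> B" using oB sB open_contains_ball by blast
  define z where "z = s + min (e/2) ((t - s)/2)"
  have "z \<in> ball s e" using e st by (auto simp: z_def dist_real_def)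
  moreover have "z \<in> {s<..t}"
  proof -
    have "min (e/2) ((t - s)/2) \<le> (t - s)/2" by (rule min.cobounded2)
    moreover have "min (e/2) ((t - s)/2) > 0" using e st by auto
    ultimately
    show ?thesis unfolding z_def by simp
  qed
  ultimately have "B \<inter> {s<..t} \<noteq> {}" using e by blast
  then show False using connectedD[OF connected_Ioc oA oB disj cov] tA by blast
qed

lemma E':
  assumes NC: "\<forall>s. \<exists>w. far s w"
    and st: "s < t" "t < s + L" "\<not> far s t"
    and v: "s < v" "v < t" "far s v \<or> far t v"
    and u: "t < u" "u < s + L" "far s u \<or> far t u"
  shows False
proof -
  consider "far s v" "far s u" | "far t v" "far t u" | "far s v" "far t u" | "far t v" "far s u"
    using v(3) u(3) by blast
  then show False
  proof cases
    case 1
    then have "far s t" using QCf[of s v t u] v u st by auto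
    then show False using st by simp
  next
    case 2
    have "far t (v + L)" using 2(1) far_perR by metis
    then have "far t (s + L)" using QCf[of t u "s + L" "v + L"] 2 v u st by auto
    then show False using st(3) far_perR far_sym by metis
  next
    case 3 then show False using Ec[OF NC st] v u by blast
  next
    case 4 then show False using Ed[OF NC st] v u by blast
  qed
qed

end

context comb begin

definition diamOK :: "real \<Rightarrow> real \<Rightarrow> bool" where
  "diamOK a b \<longleftrightarrow> (\<forall>p q. a \<le> p \<longrightarrow> p \<le> b \<longrightarrow> a \<le> q \<longrightarrow> q \<le> b \<longrightarrow> \<not> far p q)"

lemma not_diamOK: assumes "\<not> diamOK a b" shows "\<exists>p q. a \<le> p \<and> p < q \<and> q \<le> b \<and> far p q"
proof -
  obtain p q where pq: "a \<le> p" "p \<le> b" "a \<le> q" "q \<le> b" "far p q"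
    using assms unfolding diamOK_def by blast
  have "p \<noteq> q" using pq(5) far_refl by auto
  show ?thesis
  proof (cases "p < q")
    case True then show ?thesis using pq by blast
  next
    case False
    then have "q < p" using \<open>p \<noteq> q\<close> by simp
    then show ?thesis using pq far_sym by blast
  qed
qed

lemma KP:
  assumes NC: "\<forall>s. \<exists>w. far s w"
    and st: "s < t" "t < s + L" "\<not> far s t"
  shows "diamOK s t \<or> diamOK t (s + L)"
proof (rule ccontr)
  assume "\<not> ?thesis"
  then have n1: "\<not> diamOK s t" and n2: "\<not> diamOK t (s + L)" by auto
  obtain p q where pq: "s \<le> p" "p < q" "q \<le> t" "far p q" using not_diamOK[OF n1] by blast
  obtain p' q' where pq': "t \<le> p'" "p' < q'" "q' \<le> s + L" "far p' q'" using not_diamOK[OF n2] by blast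
  have ts: "\<not> far t (s + L)" using st(3) far_perR far_sym by metis
  show False
  proof (cases "\<exists>v. s < v \<and> v < t \<and> (far s v \<or> far t v)")
    case True
    then obtain v where v: "s < v" "v < t" "far s v \<or> far t v" by blast
    show False
    proof (cases "\<exists>u. t < u \<and> u < s + L \<and> (far s u \<or> far t u)")
      case True
      then obtain u where u: "t < u" "u < s + L" "far s u \<or> far t u" by blast
      show False by (rule E'[OF NC st v u])
    next
      case False
      then have nb: "\<And>u. t < u \<Longrightarrow> u < s + L \<Longrightarrow> \<not> far s u \<and> \<not> far t u" by blast
      obtain w where w: "t < w" "w < t + L" "far t w" using NC'[OF NC] by blast
      have "\<not> (w < s + L)" using nb w by blast
      moreover have "w \<noteq> s + L" using ts w by auto
      ultimately have w2: "s + L < w" by simp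
      have near: "\<not> far t z" if "t \<le> z" "z \<le> s + L" for z
      proof (cases "z = t \<or> z = s + L")
        case True then show ?thesis using far_refl ts by auto
      next
        case False then show ?thesis using nb that by auto
      qed
      have "t < p'"
      proof (rule ccontr)
        assume "\<not> t < p'"
        then have "p' = t" using pq' by simp
        then show False using near[of q'] pq' by auto
      qed
      have A: "t < q'" "q' < t + L" "\<not> far t q'" using pq' \<open>t < p'\<close> st near[of q'] by auto
      have B: "t < p'" "p' < q'" "far t p' \<or> far q' p'" using \<open>t < p'\<close> pq' far_sym by auto
      have Cc: "q' < w" "w < t + L" "far t w \<or> far q' w" using pq' w w2 by auto
      show False by (rule E'[OF NC A B Cc])
    qed
  next
    case False
    then have nb: "\<And>v. s < v \<Longrightarrow> v < t \<Longrightarrow> \<not> far s v \<and> \<not> far t v" by blast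
    obtain w where w: "s < w" "w < s + L" "far s w" using NC'[OF NC] by blast
    have "\<not> (w < t)" using nb w by blast
    moreover have "w \<noteq> t" using st w by auto
    ultimately have w2: "t < w" by simp
    have near: "\<not> far s z" if "s \<le> z" "z \<le> t" for z
    proof (cases "z = s \<or> z = t")
      case True then show ?thesis using far_refl st by auto
    next
      case False then show ?thesis using nb that by auto
    qed
    have "s < p"
    proof (rule ccontr)
      assume "\<not> s < p"
      then have "p = s" using pq by simp
      then show False using near[of q] pq by auto
    qed
    have A: "s < q" "q < s + L" "\<not> far s q" using pq \<open>s < p\<close> st near[of q] by auto
    have B: "s < p" "p < q" "far s p \<or> far q p" using \<open>s < p\<close> pq far_sym by auto
    have Cc: "q < w" "w < s + L" "far s w \<or> far q w" using pq w w2 by auto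
    show False by (rule E'[OF NC A B Cc])
  qed
qed

lemma far_shift: "far (p + of_int k * L) (q + of_int k * L) = far p q"
  by (simp add: per_int)

lemma diamOK_shift: assumes "diamOK s t" shows "diamOK (s + of_int k * L) (t + of_int k * L)"
  unfolding diamOK_def
proof (intro allI impI)
  fix p q assume h: "s + of_int k * L \<le> p" "p \<le> t + of_int k * L" "s + of_int k * L \<le> q" "q \<le> t + of_int k * L"
  have "\<not> far (p - of_int k * L) (q - of_int k * L)"
    using assms h unfolding diamOK_def by auto
  then show "\<not> far p q" using far_shift[of "p - of_int k * L" k "q - of_int k * L"] by simp
qed

lemma transfer:
  assumes "diamOK s t" "s < t" "t < s + L" "\<alpha> s' = \<alpha> s" "\<alpha> t' = \<alpha> t" "s' < t'" "t' < s' + L"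
  shows "diamOK s' t'"
proof -
  obtain k :: int where k: "s' = s + of_int k * L" using same_point[of s s'] assms(4) by metis
  define t0 where "t0 = t' - of_int k * L"
  have a0: "\<alpha> t0 = \<alpha> t" using per_int[of t0 k] assms(5) by (simp add: t0_def)
  have t0: "s < t0" "t0 < s + L" using assms(6,7) k by (auto simp: t0_def)
  have "t0 = t"
  proof (rule ccontr)
    assume "t0 \<noteq> t"
    then consider "t < t0" | "t0 < t" by linarith
    then show False
    proof cases
      case 1 then show False using inj_mod[of t t0] a0 t0 assms(2,3) by auto
    next
      case 2 then show False using inj_mod[of t0 t] a0 t0 assms(2,3) by auto
    qed
  qed
  then have "t' = t + of_int k * L" by (simp add: t0_def)
  then show ?thesis using diamOK_shift[OF assms(1), of k] k by simp
qed

definition Dg :: "real^2 \<Rightarrow> real^2 \<Rightarrow> bool" where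
  "Dg x y \<longleftrightarrow> x \<in> C \<and> y \<in> C \<and> x \<noteq> y \<and> (\<exists>s t. \<alpha> s = x \<and> \<alpha> t = y \<and> s < t \<and> t < s + L \<and> diamOK s t)"

lemma main: "is_cyclic_graph C (cyc_order \<alpha> L) (VR_edge C r) \<or> is_cone C (VR_edge C r)"
proof (cases "is_cone C (VR_edge C r)")
  case True then show ?thesis by simp
next
  case ncone: False
  have NC: "\<forall>s. \<exists>w. far s w"
  proof
    fix s
    obtain w where w: "w \<in> C" "w \<noteq> \<alpha> s" "\<not> VR_edge C r (\<alpha> s) w"
      using ncone in_C unfolding is_cone_def by blast
    then have "dist (\<alpha> s) w > r" unfolding VR_edge_def by auto
    moreover obtain w' where "w = \<alpha> w'" using w(1) range_C by blast
    ultimately show "\<exists>w. far s w" by blast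
  qed
  have asym: "\<not> Dg y x" if "Dg x y" for x y
  proof
    assume "Dg y x"
    obtain s t where st: "\<alpha> s = x" "\<alpha> t = y" "s < t" "t < s + L" "diamOK s t"
      using \<open>Dg x y\<close> unfolding Dg_def by blast
    obtain t1 s1 where ts1: "\<alpha> t1 = y" "\<alpha> s1 = x" "t1 < s1" "s1 < t1 + L" "diamOK t1 s1"
      using \<open>Dg y x\<close> unfolding Dg_def by blast
    have d2: "diamOK t (s + L)"
      by (rule transfer[OF ts1(5) ts1(3) ts1(4)]) (use st ts1 per in auto)
    have "is_cone C (VR_edge C r)"
      unfolding is_cone_def
    proof (intro bexI ballI impI)
      show "x \<in> C" using st(1) by auto
      fix w assume w: "w \<in> C" "w \<noteq> x"
      obtain w' where w': "s \<le> w'" "w' < s + L" "\<alpha> w' = w"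
        using rep[of s] w(1) range_C by (metis rangeE)
      have "\<not> far s w'"
      proof (cases "w' \<le> t")
        case True then show ?thesis using st(5) w' unfolding diamOK_def by auto
      next
        case False
        then have "\<not> far (s + L) w'" using d2 w' unfolding diamOK_def by auto
        then show ?thesis using far_perL by simp
      qed
      then show "VR_edge C r x w" using w w' st(1) unfolding VR_edge_def by auto
    qed
    then show False using ncone by simp
  qed
  have c1: "\<forall>x y. Dg x y \<longrightarrow> x \<in> C \<and> y \<in> C \<and> x \<noteq> y \<and> \<not> Dg y x"
    using asym unfolding Dg_def by blast
  have c2: "\<forall>x\<in>C. \<forall>y\<in>C. \<forall>z\<in>C. cyc_order \<alpha> L x y z \<and> Dg x z \<longrightarrow> Dg x y \<and> Dg y z"
  proof (intro ballI impI)
    fix x y z assume xyz: "x \<in> C" "y \<in> C" "z \<in> C" and h: "cyc_order \<alpha> L x y z \<and> Dg x z"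
    obtain s t u where stu: "s < t" "t < u" "u < s + L" "\<alpha> s = x" "\<alpha> t = y" "\<alpha> u = z"
      using h unfolding cyc_order_def by blast
    obtain s1 u1 where su1: "\<alpha> s1 = x" "\<alpha> u1 = z" "s1 < u1" "u1 < s1 + L" "diamOK s1 u1"
      using h unfolding Dg_def by blast
    have dsu: "diamOK s u" by (rule transfer[OF su1(5) su1(3) su1(4)]) (use stu su1 in auto)
    have dst: "diamOK s t" "diamOK t u" using dsu stu unfolding diamOK_def by auto
    have "x \<noteq> y" using inj_mod[of s t] stu by auto
    moreover have "y \<noteq> z" using inj_mod[of t u] stu by auto
    moreover have "t < s + L" "u < t + L" using stu by auto
    ultimately show "Dg x y \<and> Dg y z" unfolding Dg_def using xyz stu dst by blast
  qed
  have cyc: "cyclic_digraph C (cyc_order \<alpha> L) Dg"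
    unfolding cyclic_digraph_def using c1 c2 by blast
  have edges: "VR_edge C r x y \<longleftrightarrow> Dg x y \<or> Dg y x" for x y
  proof
    assume e: "VR_edge C r x y"
    then have xy: "x \<in> C" "y \<in> C" "x \<noteq> y" "dist x y \<le> r" unfolding VR_edge_def by auto
    obtain s where s: "\<alpha> s = x" using xy(1) range_C by (metis rangeE)
    obtain t where t: "s \<le> t" "t < s + L" "\<alpha> t = y" using rep[of s] xy(2) range_C by (metis rangeE)
    have "s \<noteq> t" using s t xy by auto
    then have st: "s < t" using t by simp
    have nf: "\<not> far s t" using s t xy by simp
    from KP[OF NC st t(2) nf] show "Dg x y \<or> Dg y x"
    proof
      assume "diamOK s t" then show ?thesis unfolding Dg_def using xy s t st by blast
    next
      assume d: "diamOK t (s + L)"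
      have "\<alpha> (s + L) = x" using s per by simp
      then show ?thesis unfolding Dg_def using xy t st d by auto
    qed
  next
    assume "Dg x y \<or> Dg y x"
    then show "VR_edge C r x y"
    proof
      assume "Dg x y"
      then obtain s t where st: "\<alpha> s = x" "\<alpha> t = y" "s < t" "t < s + L" "diamOK s t" "x \<in> C" "y \<in> C" "x \<noteq> y"
        unfolding Dg_def by blast
      then have "\<not> far s t" unfolding diamOK_def by auto
      then show ?thesis using st unfolding VR_edge_def by auto
    next
      assume "Dg y x"
      then obtain s t where st: "\<alpha> s = y" "\<alpha> t = x" "s < t" "t < s + L" "diamOK s t" "x \<in> C" "y \<in> C" "y \<noteq> x"
        unfolding Dg_def by blast
      then have "\<not> far s t" unfolding diamOK_def by auto
      then show ?thesis using st unfolding VR_edge_def by (auto simp: dist_commute)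
    qed
  qed
  have "is_cyclic_graph C (cyc_order \<alpha> L) (VR_edge C r)"
    unfolding is_cyclic_graph_def using cyc edges by blast
  then show ?thesis by simp
qed

end


theorem theorem1p3:
  fixes \<alpha> :: "real \<Rightarrow> real^2" and L :: real and C :: "(real^2) set"
  assumes param: "closed_param \<alpha> L"
    and C_def: "C = \<alpha> ` {0..L}"
    and scvx: "strictly_convex_curve C"
    and diff: "\<And>t. \<alpha> differentiable (at t)"
    and regular: "\<And>t. vector_derivative \<alpha> (at t) \<noteq> 0"
    and diffT: "\<And>t. unit_tangent \<alpha> differentiable (at t)"
    and curv_pos: "\<And>t. curvature \<alpha> t > 0"
    and evol: "evolute \<alpha> \<subseteq> convex hull C"
    and r: "r \<ge> 0"
  shows "is_cyclic_graph C (cyc_order \<alpha> L) (VR_edge C r) \<or> is_cone C (VR_edge C r)"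
proof -
  interpret comb \<alpha> L C r
    by (intro comb.intro geo.intro comb_axioms.intro) (fact param C_def scvx diff regular diffT curv_pos evol r)+
  show ?thesis by (rule main)
qed

end
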